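(* Fix an integer $d\ge 1$ and let $n$ be the problem size. Let $\mathcal{L}$ be the oracle of a uniformly random $d$-Serial Simon's instance with target period $s=s_d$ (as defined in the context). Let $\mathcal{A}^{\mathcal{L}}=\Pi\circ U_{d+1}\circ\mathcal{L}\circ U_d\circ\cdots\circ\mathcal{L}\circ U_2\circ\mathcal{L}\circ U_1$ be any $\mathrm{QNC}_d$ circuit with oracle access to $\mathcal{L}$, acting on $\mathrm{poly}(n)$ qubits initialised to $|0\cdots0\rangle$, where each $U_j$ is a single-layer unitary (chosen independently of the oracle), each application of $\mathcal{L}$ may consist of polynomially many parallel queries, and $\Pi$ is a computational-basis measurement whose outcome is the output. Then $\Pr[s\leftarrow\mathcal{A}^{\mathcal{L}}]\le \mathrm{poly}(n)\cdot 2^{-n}$; in particular the success probability is negligible.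
   Context: A Simon function on $n$ bits is a pair $(f,s)$ with $s\in\{0,1\}^n\setminus\{0^n\}$ and $f:\{0,1\}^n\to\{0,1\}^n$ two-to-one such that $f(x)=f(y)\iff y\in\{x,x\oplus s\}$; "uniformly random Simon function" means $(f,s)$ is uniform over all such pairs. A single-layer unitary is a product of one- and two-qubit gates acting on pairwise disjoint qubits. The oracle of a function $F$ (possibly taking value $\perp$, encoded as a distinguished string of the response register) acts as $|x\rangle|a\rangle\mapsto|x\rangle|a\oplus F(x)\rangle$; oracle access to several functions means access to all of them (in parallel). $d$-Serial Simon's instance: sample independent uniformly random Simon functions $(f_i,s_i)$, $i=0,1,\dots,d$, on $n$ bits. Define $L_0(x,z)=f_0(x)$ and, for $1\le i\le d$, $L_i(x,z)=f_i(x)$ if $z=s_{i-1}$ and $L_i(x,z)=\perp$ otherwise (for $x,z\in\{0,1\}^n$). The oracle $\mathcal{L}$ is the oracle associated with $(L_0,\dots,L_d)$. The (search) problem is: given $\mathcal{L}$, output $s_d$. *)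

theory Defs
  imports "HOL-Probability.Probability"
begin

definition bits :: "nat \<Rightarrow> bool list set" where
  "bits n = {xs. length xs = n}"

definition xorb :: "bool list \<Rightarrow> bool list \<Rightarrow> bool list" where
  "xorb xs ys = map (\<lambda>(a, b). a \<noteq> b) (zip xs ys)"

text \<open>A Simon function on n bits: a pair (f,s), s a nonzero n-bit string, f a map from
  n-bit strings to n-bit strings (extensional, i.e. undefined outside the n-bit strings,
  so that the set of all such pairs is finite) with f x = f y iff y in {x, x xor s}.\<close>

definition simon_fun :: "nat \<Rightarrow> (bool list \<Rightarrow> bool list) \<Rightarrow> bool list \<Rightarrow> bool" where
  "simon_fun n f s \<longleftrightarrow>
     s \<in> bits n \<and> s \<noteq> replicate n False \<and> f \<in> bits n \<rightarrow>\<^sub>E bits n \<and>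
     (\<forall>x\<in>bits n. \<forall>y\<in>bits n. f x = f y \<longleftrightarrow> (y = x \<or> y = xorb x s))"

definition simon_set :: "nat \<Rightarrow> ((bool list \<Rightarrow> bool list) \<times> bool list) set" where
  "simon_set n = {(f, s). simon_fun n f s}"

text \<open>A d-Serial Simon sinstance: the tuple ((f_0,s_0),...,(f_d,s_d)) of independent
  uniformly random Simon functions, i.e. a uniformly random element of this product set.\<close>

type_synonym sinstance = "nat \<Rightarrow> ((bool list \<Rightarrow> bool list) \<times> bool list)"

definition serial_instances :: "nat \<Rightarrow> nat \<Rightarrow> sinstance set" where
  "serial_instances n d = PiE {..d} (\<lambda>_. simon_set n)"

text \<open>The functions L_i; None stands for the value bottom.\<close>

definition Lfun :: "sinstance \<Rightarrow> nat \<Rightarrow> bool list \<Rightarrow> bool list \<Rightarrow> bool list option" where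
  "Lfun I i x z =
     (if i = 0 then Some (fst (I 0) x)
      else if z = snd (I (i - 1)) then Some (fst (I i) x) else None)"

definition enc :: "nat \<Rightarrow> bool list option \<Rightarrow> bool list" where
  "enc n r = (case r of None \<Rightarrow> True # replicate n False | Some v \<Rightarrow> False # v)"

text \<open>A state of m qubits is a map from m-bit strings (computational basis) to amplitudes.\<close>

type_synonym qstate = "bool list \<Rightarrow> complex"

definition init_state :: "nat \<Rightarrow> qstate" where
  "init_state m = (\<lambda>y. if y = replicate m False then 1 else 0)"

definition upd_pos :: "bool list \<Rightarrow> nat list \<Rightarrow> bool list \<Rightarrow> bool list" where
  "upd_pos y ps a = foldr (\<lambda>(p, b) y. y[p := b]) (zip ps a) y"

definition get_pos :: "bool list \<Rightarrow> nat list \<Rightarrow> bool list" where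
  "get_pos y ps = map (\<lambda>p. y ! p) ps"

text \<open>A gate: the list of qubits it acts on and its matrix, indexed by
  (length ps)-bit strings (row, column).\<close>

type_synonym gate = "nat list \<times> (bool list \<Rightarrow> bool list \<Rightarrow> complex)"

definition valid_gate :: "nat \<Rightarrow> gate \<Rightarrow> bool" where
  "valid_gate m g \<longleftrightarrow>
     (let ps = fst g; G = snd g; k = length ps in
       k \<in> {1, 2} \<and> distinct ps \<and> (\<forall>p\<in>set ps. p < m) \<and>
       (\<forall>a\<in>bits k. \<forall>b\<in>bits k.
          (\<Sum>c\<in>bits k. cnj (G c a) * G c b) = (if a = b then 1 else 0)))"

definition apply_gate :: "nat \<Rightarrow> gate \<Rightarrow> qstate \<Rightarrow> qstate" where
  "apply_gate m g \<psi> = (\<lambda>y. if length y = m then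
       (\<Sum>a\<in>bits (length (fst g)). snd g (get_pos y (fst g)) a * \<psi> (upd_pos y (fst g) a))
     else 0)"

definition valid_layer :: "nat \<Rightarrow> gate list \<Rightarrow> bool" where
  "valid_layer m gs \<longleftrightarrow>
     (\<forall>g\<in>set gs. valid_gate m g) \<and>
     (\<forall>i<length gs. \<forall>j<length gs. i \<noteq> j \<longrightarrow> set (fst (gs ! i)) \<inter> set (fst (gs ! j)) = {})"

definition apply_layer :: "nat \<Rightarrow> gate list \<Rightarrow> qstate \<Rightarrow> qstate" where
  "apply_layer m gs \<psi> = fold (apply_gate m) gs \<psi>"

text \<open>A query (i, xq, aq): query the oracle of L_i with query register at positions xq
  (2n qubits, holding (x,z)) and response register at positions aq (n+1 qubits).\<close>

type_synonym query = "nat \<times> nat list \<times> nat list"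

definition valid_query :: "nat \<Rightarrow> nat \<Rightarrow> nat \<Rightarrow> query \<Rightarrow> bool" where
  "valid_query n d m q \<longleftrightarrow>
     (case q of (i, xq, aq) \<Rightarrow>
        i \<le> d \<and> length xq = 2 * n \<and> length aq = n + 1 \<and> distinct (xq @ aq) \<and>
        (\<forall>p\<in>set (xq @ aq). p < m))"

definition query_qubits :: "query \<Rightarrow> nat set" where
  "query_qubits q = (case q of (i, xq, aq) \<Rightarrow> set xq \<union> set aq)"

definition valid_oracle_layer :: "nat \<Rightarrow> nat \<Rightarrow> nat \<Rightarrow> query list \<Rightarrow> bool" where
  "valid_oracle_layer n d m qs \<longleftrightarrow>
     (\<forall>q\<in>set qs. valid_query n d m q) \<and>
     (\<forall>i<length qs. \<forall>j<length qs. i \<noteq> j \<longrightarrow> query_qubits (qs ! i) \<inter> query_qubits (qs ! j) = {})"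

text \<open>|x>|a> \<mapsto> |x>|a xor L_i(x,z)>; as XOR is an involution the new amplitude at y is the
  old amplitude at y with the response register xored with the encoded answer.\<close>

definition apply_query :: "nat \<Rightarrow> sinstance \<Rightarrow> nat \<Rightarrow> query \<Rightarrow> qstate \<Rightarrow> qstate" where
  "apply_query n I m q \<psi> = (case q of (i, xq, aq) \<Rightarrow>
     (\<lambda>y. if length y = m then
        (let xv = get_pos y xq in
          \<psi> (upd_pos y aq (xorb (get_pos y aq) (enc n (Lfun I i (take n xv) (drop n xv))))))
      else 0))"

definition apply_oracle_layer :: "nat \<Rightarrow> sinstance \<Rightarrow> nat \<Rightarrow> query list \<Rightarrow> qstate \<Rightarrow> qstate" where
  "apply_oracle_layer n I m qs \<psi> = fold (apply_query n I m) qs \<psi>"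

text \<open>A circuit: number of qubits, single layers U 0, ..., U d (the paper's U_1..U_{d+1}),
  oracle layers Q 0, ..., Q (d-1), and the list of measured output qubits.\<close>

record circuit =
  nqubits :: nat
  ulayers :: "nat \<Rightarrow> gate list"
  olayers :: "nat \<Rightarrow> query list"
  outq :: "nat list"

definition valid_circuit :: "nat \<Rightarrow> nat \<Rightarrow> circuit \<Rightarrow> bool" where
  "valid_circuit n d C \<longleftrightarrow>
     (\<forall>j\<le>d. valid_layer (nqubits C) (ulayers C j)) \<and>
     (\<forall>j<d. valid_oracle_layer n d (nqubits C) (olayers C j)) \<and>
     length (outq C) = n \<and> distinct (outq C) \<and> (\<forall>p\<in>set (outq C). p < nqubits C)"

fun run :: "nat \<Rightarrow> sinstance \<Rightarrow> circuit \<Rightarrow> nat \<Rightarrow> qstate" where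
  "run n I C 0 = apply_layer (nqubits C) (ulayers C 0) (init_state (nqubits C))"
| "run n I C (Suc k) = apply_layer (nqubits C) (ulayers C (Suc k))
      (apply_oracle_layer n I (nqubits C) (olayers C k) (run n I C k))"

definition output_prob :: "nat \<Rightarrow> nat \<Rightarrow> sinstance \<Rightarrow> circuit \<Rightarrow> bool list \<Rightarrow> real" where
  "output_prob n d I C t =
     (\<Sum>y\<in>bits (nqubits C). if get_pos y (outq C) = t then (cmod (run n I C d y))\<^sup>2 else 0)"

definition success_prob :: "nat \<Rightarrow> nat \<Rightarrow> circuit \<Rightarrow> real" where
  "success_prob n d C =
     measure_pmf.expectation (pmf_of_set (serial_instances n d))
       (\<lambda>I. output_prob n d I C (snd (I d)))"

end

theory Submission
  imports Defs
begin


lemma bits_iff[simp]: "xs \<in> bits n \<longleftrightarrow> length xs = n" by (simp add: bits_def)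

lemma length_xorb[simp]: "length (xorb x y) = min (length x) (length y)"
  by (simp add: xorb_def)
lemma nth_xorb[simp]: "i < length x \<Longrightarrow> i < length y \<Longrightarrow> xorb x y ! i = (x ! i \<noteq> y ! i)"
  by (simp add: xorb_def)

lemma length_get_pos[simp]: "length (get_pos y ps) = length ps" by (simp add: get_pos_def)
lemma nth_get_pos[simp]: "i < length ps \<Longrightarrow> get_pos y ps ! i = y ! (ps ! i)" by (simp add: get_pos_def)

lemma upd_pos_Cons: "upd_pos y (p#ps) (b#a) = (upd_pos y ps a)[p := b]"
  by (simp add: upd_pos_def)
lemma upd_pos_Nil[simp]: "upd_pos y [] a = y" by (simp add: upd_pos_def)

lemma length_upd_pos[simp]: "length (upd_pos y ps a) = length y"
proof (induction ps arbitrary: a)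
  case (Cons p ps) then show ?case by (cases a) (auto simp: upd_pos_Cons upd_pos_def)
qed (simp add: upd_pos_def)

lemma nth_upd_pos_out: "j \<notin> set ps \<Longrightarrow> upd_pos y ps a ! j = y ! j"
proof (induction ps arbitrary: a)
  case Nil then show ?case by simp
next
  case (Cons p ps) then show ?case by (cases a) (auto simp: upd_pos_Cons upd_pos_def)
qed

lemma nth_upd_pos_in: "distinct ps \<Longrightarrow> length a = length ps \<Longrightarrow> i < length ps \<Longrightarrow> ps ! i < length y
  \<Longrightarrow> upd_pos y ps a ! (ps ! i) = a ! i"
proof (induction ps arbitrary: a i)
  case Nil then show ?case by simp
next
  case (Cons p ps)
  then obtain b a' where a: "a = b # a'" by (cases a) auto
  show ?case
  proof (cases i)
    case 0 then show ?thesis using Cons a by (simp add: upd_pos_Cons)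
  next
    case (Suc i')
    then have "ps ! i' \<noteq> p" using Cons by (auto simp: nth_mem)
    then show ?thesis using Cons a Suc by (simp add: upd_pos_Cons)
  qed
qed

lemma get_upd_pos[simp]: "distinct ps \<Longrightarrow> length a = length ps \<Longrightarrow> \<forall>p\<in>set ps. p < length y
  \<Longrightarrow> get_pos (upd_pos y ps a) ps = a"
  by (rule nth_equalityI) (auto simp: nth_upd_pos_in nth_mem)

lemma get_upd_pos_disj: "set qs \<inter> set ps = {} \<Longrightarrow> get_pos (upd_pos y ps a) qs = get_pos y qs"
  by (rule nth_equalityI) (auto simp: nth_upd_pos_out nth_mem disjoint_iff)

lemma nth_upd_pos_cases: "distinct ps \<Longrightarrow> length a = length ps \<Longrightarrow> \<forall>p\<in>set ps. p < length y \<Longrightarrow> j < length y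
  \<Longrightarrow> upd_pos y ps a ! j = (if j \<in> set ps then a ! (SOME i. i < length ps \<and> ps ! i = j) else y ! j)"
proof (cases "j \<in> set ps")
  case True
  assume *: "distinct ps" "length a = length ps" "\<forall>p\<in>set ps. p < length y"
  from True obtain i where i: "i < length ps" "ps ! i = j" by (auto simp: in_set_conv_nth)
  have "(SOME i. i < length ps \<and> ps ! i = j) = i"
    using i * by (auto intro!: some_equality simp: nth_eq_iff_index_eq)
  then show ?thesis using i * True nth_upd_pos_in[of ps a i y] by auto
qed (simp add: nth_upd_pos_out)

lemma upd_upd_pos[simp]: "distinct ps \<Longrightarrow> length a = length ps \<Longrightarrow> length b = length ps \<Longrightarrow> \<forall>p\<in>set ps. p < length y
  \<Longrightarrow> upd_pos (upd_pos y ps a) ps b = upd_pos y ps b"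
  by (rule nth_equalityI) (auto simp: nth_upd_pos_cases)

lemma upd_get_pos[simp]: "distinct ps \<Longrightarrow> \<forall>p\<in>set ps. p < length y
  \<Longrightarrow> upd_pos y ps (get_pos y ps) = y"
proof (rule nth_equalityI)
  fix j assume *: "distinct ps" "\<forall>p\<in>set ps. p < length y" and j: "j < length (upd_pos y ps (get_pos y ps))"
  show "upd_pos y ps (get_pos y ps) ! j = y ! j"
  proof (cases "j \<in> set ps")
    case True
    from True obtain i where i: "i < length ps" "ps ! i = j" by (auto simp: in_set_conv_nth)
    then show ?thesis using * nth_upd_pos_in[of ps "get_pos y ps" i y] by auto
  qed (simp add: nth_upd_pos_out)
qed simp


lemma finite_bits[simp]: "finite (bits n)"
proof -
  show ?thesis using finite_lists_length_eq[of "UNIV::bool set" n] by (simp add: bits_def)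
qed

lemma card_bits: "card (bits n) = 2 ^ n"
proof -
  show ?thesis using card_lists_length_eq[of "UNIV::bool set" n] by (simp add: bits_def)
qed

definition S2 :: "bool list set \<Rightarrow> qstate \<Rightarrow> real" where
  "S2 A \<psi> = (\<Sum>y\<in>A. (cmod (\<psi> y))\<^sup>2)"

lemma iso:
  fixes G :: "'a \<Rightarrow> 'a \<Rightarrow> complex"
  assumes fin: "finite K"
    and orth: "\<forall>a\<in>K. \<forall>b\<in>K. (\<Sum>c\<in>K. cnj (G c a) * G c b) = (if a = b then 1 else 0)"
  shows "(\<Sum>c\<in>K. (cmod (\<Sum>a\<in>K. G c a * v a))\<^sup>2) = (\<Sum>a\<in>K. (cmod (v a))\<^sup>2)"
proof -
  have orth': "(\<Sum>c\<in>K. G c a * cnj (G c b)) = (if a = b then 1 else 0)" if "a \<in> K" "b \<in> K" for a b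
  proof -
    have "(\<Sum>c\<in>K. G c a * cnj (G c b)) = cnj (\<Sum>c\<in>K. cnj (G c a) * G c b)"
      by (simp add: mult.commute)
    then show ?thesis using orth that by simp
  qed
  have "complex_of_real (\<Sum>c\<in>K. (cmod (\<Sum>a\<in>K. G c a * v a))\<^sup>2)
      = (\<Sum>c\<in>K. (\<Sum>a\<in>K. G c a * v a) * cnj (\<Sum>b\<in>K. G c b * v b))"
    unfolding of_real_sum by (intro sum.cong refl) (rule complex_norm_square)
  also have "\<dots> = (\<Sum>c\<in>K. \<Sum>b\<in>K. \<Sum>a\<in>K. v a * (cnj (v b) * (G c a * cnj (G c b))))"
    by (simp add: sum_distrib_left sum_distrib_right mult_ac)
  also have "\<dots> = (\<Sum>b\<in>K. \<Sum>c\<in>K. \<Sum>a\<in>K. v a * (cnj (v b) * (G c a * cnj (G c b))))"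
    by (rule sum.swap)
  also have "\<dots> = (\<Sum>b\<in>K. \<Sum>a\<in>K. \<Sum>c\<in>K. v a * (cnj (v b) * (G c a * cnj (G c b))))"
    by (intro sum.cong refl sum.swap)
  also have "\<dots> = (\<Sum>b\<in>K. \<Sum>a\<in>K. v a * cnj (v b) * (\<Sum>c\<in>K. G c a * cnj (G c b)))"
    by (simp add: sum_distrib_left mult_ac)
  also have "\<dots> = (\<Sum>b\<in>K. \<Sum>a\<in>K. if a = b then v b * cnj (v b) else 0)"
    by (intro sum.cong refl) (auto simp: orth')
  also have "\<dots> = (\<Sum>a\<in>K. v a * cnj (v a))"
    using fin by (simp add: sum.delta')
  also have "\<dots> = complex_of_real (\<Sum>a\<in>K. (cmod (v a))\<^sup>2)"
    unfolding of_real_sum by (intro sum.cong refl) (rule complex_norm_square[symmetric])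
  finally show ?thesis by (simp only: of_real_eq_iff)
qed

lemma decomp:
  assumes d: "distinct ps" and lt: "\<forall>p\<in>set ps. p < m"
  defines "R \<equiv> (\<lambda>y. upd_pos y ps (replicate (length ps) False)) ` bits m"
  shows "(\<Sum>y\<in>bits m. h y) = (\<Sum>r\<in>R. \<Sum>c\<in>bits (length ps). h (upd_pos r ps c))"
proof -
  have "(\<Sum>y\<in>bits m. h y) = (\<Sum>rc\<in>R \<times> bits (length ps). h (upd_pos (fst rc) ps (snd rc)))"
  proof (rule sum.reindex_bij_witness[where j = "\<lambda>y. (upd_pos y ps (replicate (length ps) False), get_pos y ps)"
        and i = "\<lambda>rc. upd_pos (fst rc) ps (snd rc)"])
    fix a assume "a \<in> bits m" then show "upd_pos (fst (upd_pos a ps (replicate (length ps) False), get_pos a ps)) ps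
          (snd (upd_pos a ps (replicate (length ps) False), get_pos a ps)) = a"
      using d lt by simp
  next
    fix a assume "a \<in> bits m" then show "(upd_pos a ps (replicate (length ps) False), get_pos a ps) \<in> R \<times> bits (length ps)"
      by (auto simp: R_def)
  next
    fix b assume "b \<in> R \<times> bits (length ps)"
    then obtain y c where b: "b = (upd_pos y ps (replicate (length ps) False), c)" "length y = m" "length c = length ps"
      by (auto simp: R_def)
    then show "(upd_pos (upd_pos (fst b) ps (snd b)) ps (replicate (length ps) False), get_pos (upd_pos (fst b) ps (snd b)) ps) = b"
      using d lt by simp
  next
    fix b assume "b \<in> R \<times> bits (length ps)"
    then show "upd_pos (fst b) ps (snd b) \<in> bits m" by (auto simp: R_def)
  next
    fix a assume "a \<in> bits m"
    then show "h (upd_pos (fst (upd_pos a ps (replicate (length ps) False), get_pos a ps)) ps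
          (snd (upd_pos a ps (replicate (length ps) False), get_pos a ps))) = h a"
      using d lt by simp
  qed
  also have "\<dots> = (\<Sum>r\<in>R. \<Sum>c\<in>bits (length ps). h (upd_pos r ps c))"
    by (simp add: sum.cartesian_product R_def case_prod_unfold)
  finally show ?thesis .
qed

lemma gate_S2:
  assumes "valid_gate m g"
  shows "S2 (bits m) (apply_gate m g \<psi>) = S2 (bits m) \<psi>"
proof -
  obtain ps G where g: "g = (ps, G)" by (cases g)
  have d: "distinct ps" and lt: "\<forall>p\<in>set ps. p < m"
    and orth: "\<forall>a\<in>bits (length ps). \<forall>b\<in>bits (length ps).
          (\<Sum>c\<in>bits (length ps). cnj (G c a) * G c b) = (if a = b then 1 else 0)"
    using assms by (auto simp: valid_gate_def g Let_def)
  define R where "R = (\<lambda>y. upd_pos y ps (replicate (length ps) False)) ` bits m"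
  have Rl: "r \<in> R \<Longrightarrow> length r = m" for r by (auto simp: R_def)
  have "S2 (bits m) (apply_gate m g \<psi>) = (\<Sum>r\<in>R. \<Sum>c\<in>bits (length ps). (cmod (apply_gate m g \<psi> (upd_pos r ps c)))\<^sup>2)"
    unfolding S2_def R_def by (rule decomp[OF d lt])
  also have "\<dots> = (\<Sum>r\<in>R. \<Sum>c\<in>bits (length ps). (cmod (\<Sum>a\<in>bits (length ps). G c a * \<psi> (upd_pos r ps a)))\<^sup>2)"
    by (intro sum.cong refl) (use d lt Rl in \<open>auto simp: apply_gate_def g\<close>)
  also have "\<dots> = (\<Sum>r\<in>R. \<Sum>a\<in>bits (length ps). (cmod (\<psi> (upd_pos r ps a)))\<^sup>2)"
    by (intro sum.cong refl iso[OF finite_bits orth])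
  also have "\<dots> = S2 (bits m) \<psi>"
    unfolding S2_def R_def by (rule decomp[OF d lt, symmetric])
  finally show ?thesis .
qed

lemma gate_lin: "apply_gate m g (\<lambda>y. a y - b y) = (\<lambda>y. apply_gate m g a y - apply_gate m g b y)"
  by (auto simp: apply_gate_def algebra_simps sum_subtractf)

lemma layer_lin: "apply_layer m gs (\<lambda>y. a y - b y) = (\<lambda>y. apply_layer m gs a y - apply_layer m gs b y)"
  unfolding apply_layer_def
proof (induction gs arbitrary: a b)
  case (Cons g gs)
  then show ?case by (simp add: gate_lin)
qed simp

lemma layer_S2:
  assumes "valid_layer m gs"
  shows "S2 (bits m) (apply_layer m gs \<psi>) = S2 (bits m) \<psi>"
proof -
  have "\<forall>g\<in>set gs. valid_gate m g" using assms by (simp add: valid_layer_def)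
  then show ?thesis unfolding apply_layer_def
    by (induction gs arbitrary: \<psi>) (auto simp: gate_S2)
qed


abbreviation qi :: "query \<Rightarrow> nat" where "qi q \<equiv> fst q"
abbreviation qx :: "query \<Rightarrow> nat list" where "qx q \<equiv> fst (snd q)"
abbreviation qa :: "query \<Rightarrow> nat list" where "qa q \<equiv> snd (snd q)"

definition validI :: "nat \<Rightarrow> nat \<Rightarrow> sinstance \<Rightarrow> bool" where
  "validI n d I \<longleftrightarrow> (\<forall>i\<le>d. \<forall>x. length x = n \<longrightarrow> length (fst (I i) x) = n)"

definition ans :: "nat \<Rightarrow> sinstance \<Rightarrow> query \<Rightarrow> bool list \<Rightarrow> bool list" where
  "ans n I q y = enc n (Lfun I (qi q) (take n (get_pos y (qx q))) (drop n (get_pos y (qx q))))"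

definition piq :: "nat \<Rightarrow> sinstance \<Rightarrow> query \<Rightarrow> bool list \<Rightarrow> bool list" where
  "piq n I q y = upd_pos y (qa q) (xorb (get_pos y (qa q)) (ans n I q y))"

lemma apply_query_eq: "apply_query n I m q \<psi> = (\<lambda>y. if length y = m then \<psi> (piq n I q y) else 0)"
  by (cases q) (auto simp: apply_query_def piq_def ans_def Let_def)

lemma ans_cong: "get_pos z (qx q) = get_pos y (qx q) \<Longrightarrow> ans n K q z = ans n K q y"
  by (simp add: ans_def)

lemma length_ans:
  assumes "validI n d I" "valid_query n d m q"
  shows "length (ans n I q y) = n + 1"
proof -
  obtain i xq aq where q: "q = (i, xq, aq)" by (cases q) auto
  have i: "i \<le> d" and xl: "length xq = 2 * n" using assms(2) by (auto simp: valid_query_def q)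
  have "length (fst (I j) (take n (get_pos y xq))) = n" if "j \<le> d" for j
    using assms(1) that xl by (auto simp: validI_def)
  then show ?thesis using i by (auto simp: ans_def Lfun_def enc_def q)
qed

lemma vq_facts:
  assumes "valid_query n d m q"
  shows "distinct (qa q)" "\<forall>p\<in>set (qa q). p < m" "set (qx q) \<inter> set (qa q) = {}" "length (qa q) = n + 1"
    "length (qx q) = 2 * n" "qi q \<le> d" "distinct (qx q)"
  using assms by (cases q; auto simp: valid_query_def)+

lemma piq_len[simp]: "length (piq n I q y) = length y" by (simp add: piq_def)

lemma piq_get:
  "set xs \<inter> set (qa q) = {} \<Longrightarrow> get_pos (piq n I q y) xs = get_pos y xs"
  by (simp add: piq_def get_upd_pos_disj)

lemma piq_ans:
  assumes "valid_query n d m q" "set (qx q') \<inter> set (qa q) = {}"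
  shows "ans n K q' (piq n I q y) = ans n K q' y"
  using assms by (intro ans_cong piq_get)

lemma xorb_xorb: "length a = length e \<Longrightarrow> xorb (xorb a e) e = a"
  by (rule nth_equalityI) auto

lemma piq_piq:
  assumes "validI n d I" "valid_query n d m q" "length y = m"
  shows "piq n I q (piq n I q y) = y"
proof -
  note f = vq_facts[OF assms(2)]
  have la: "length (ans n I q y) = n + 1" by (rule length_ans[OF assms(1,2)])
  have a2: "ans n I q (piq n I q y) = ans n I q y" by (rule piq_ans[OF assms(2) f(3)])
  have lt: "\<forall>p\<in>set (qa q). p < length y" using f assms(3) by auto
  have g: "get_pos (piq n I q y) (qa q) = xorb (get_pos y (qa q)) (ans n I q y)"
    unfolding piq_def using f lt la by (simp)
  show ?thesis unfolding piq_def[of n I q "piq n I q y"] a2 g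
    using f lt la by (simp add: piq_def xorb_xorb)
qed

definition Pm :: "nat \<Rightarrow> sinstance \<Rightarrow> query list \<Rightarrow> bool list \<Rightarrow> bool list" where
  "Pm n I qs y = foldr (piq n I) qs y"

lemma Pm_Nil[simp]: "Pm n I [] y = y" and Pm_Cons[simp]: "Pm n I (q#qs) y = piq n I q (Pm n I qs y)"
  by (simp_all add: Pm_def)

lemma Pm_len[simp]: "length (Pm n I qs y) = length y"
  by (induction qs) auto

lemma fold_eq:
  "length y = m \<Longrightarrow> fold (apply_query n I m) qs \<psi> y = \<psi> (Pm n I qs y)"
proof (induction qs arbitrary: \<psi>)
  case Nil then show ?case by auto
next
  case (Cons q qs)
  show ?case using Cons by (simp add: apply_query_eq)
qed

lemma Pm_get:
  "\<forall>q\<in>set qs. set xs \<inter> set (qa q) = {} \<Longrightarrow> get_pos (Pm n I qs y) xs = get_pos y xs"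
  by (induction qs) (auto simp: piq_get)

definition QOK :: "nat \<Rightarrow> nat \<Rightarrow> nat \<Rightarrow> query list \<Rightarrow> bool" where
  "QOK n d m qs \<longleftrightarrow> (\<forall>q\<in>set qs. valid_query n d m q) \<and>
     (\<forall>q\<in>set qs. \<forall>q'\<in>set qs. set (qx q) \<inter> set (qa q') = {})"

lemma QOK_Cons: "QOK n d m (q#qs) \<Longrightarrow> QOK n d m qs"
  by (simp add: QOK_def)

lemma Pm_ans:
  "QOK n d m qs \<Longrightarrow> q' \<in> set qs \<Longrightarrow> ans n K q' (Pm n I qs y) = ans n K q' y"
  by (rule ans_cong, rule Pm_get) (auto simp: QOK_def)

lemma Pm_inj:
  assumes "QOK n d m qs" "validI n d I"
  shows "inj_on (Pm n I qs) (bits m)"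
  using assms
proof (induction qs)
  case Nil then show ?case by simp
next
  case (Cons q qs)
  have vq: "valid_query n d m q" using Cons.prems by (simp add: QOK_def)
  have ih: "inj_on (Pm n I qs) (bits m)" using Cons QOK_Cons by blast
  show ?case
  proof (rule inj_onI)
    fix x y assume x: "x \<in> bits m" and y: "y \<in> bits m" and e: "Pm n I (q#qs) x = Pm n I (q#qs) y"
    then have "piq n I q (piq n I q (Pm n I qs x)) = piq n I q (piq n I q (Pm n I qs y))" by simp
    then have "Pm n I qs x = Pm n I qs y" using piq_piq[OF Cons.prems(2) vq] x y by simp
    then show "x = y" using ih x y by (auto dest: inj_onD)
  qed
qed

lemma Pm_same:
  assumes "QOK n d m qs" "\<forall>q\<in>set qs. ans n I q y = ans n J q y"
  shows "Pm n I qs y = Pm n J qs y"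
  using assms
proof (induction qs)
  case Nil then show ?case by simp
next
  case (Cons q qs)
  have ih: "Pm n I qs y = Pm n J qs y" using Cons QOK_Cons by (metis list.set_intros(2))
  have "ans n I q (Pm n I qs y) = ans n J q (Pm n I qs y)"
  proof -
    have "ans n I q (Pm n I qs y) = ans n I q y" "ans n J q (Pm n I qs y) = ans n J q y"
      using Cons.prems(1) by (intro ans_cong Pm_get; auto simp: QOK_def)+
    then show ?thesis using Cons.prems(2) by simp
  qed
  then show ?case using ih by (simp add: piq_def)
qed

lemma sum_reindex_endo:
  assumes "finite S" "inj_on P S" "P ` S \<subseteq> S"
  shows "(\<Sum>y\<in>S. h (P y)) = (\<Sum>y\<in>S. h y)"
proof -
  have "card (P ` S) = card S" using assms by (simp add: card_image)
  then have "P ` S = S" using assms by (simp add: card_subset_eq)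
  then show ?thesis using sum.reindex[OF assms(2), of h] by simp
qed

lemma oracle_eq: "length y = m \<Longrightarrow> apply_oracle_layer n I m qs \<psi> y = \<psi> (Pm n I qs y)"
  by (simp add: apply_oracle_layer_def fold_eq)

lemma oracle_S2_diff:
  assumes "QOK n d m qs" "validI n d I"
  shows "S2 (bits m) (\<lambda>y. apply_oracle_layer n I m qs a y - apply_oracle_layer n I m qs b y)
       = S2 (bits m) (\<lambda>y. a y - b y)"
proof -
  have "S2 (bits m) (\<lambda>y. apply_oracle_layer n I m qs a y - apply_oracle_layer n I m qs b y)
     = (\<Sum>y\<in>bits m. (\<lambda>z. (cmod (a z - b z))\<^sup>2) (Pm n I qs y))"
    unfolding S2_def by (intro sum.cong refl) (auto simp: oracle_eq)
  also have "\<dots> = S2 (bits m) (\<lambda>y. a y - b y)"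
    unfolding S2_def by (rule sum_reindex_endo) (use Pm_inj[OF assms] in auto)
  finally show ?thesis .
qed

lemma oracle_S2:
  assumes "QOK n d m qs" "validI n d I"
  shows "S2 (bits m) (apply_oracle_layer n I m qs a) = S2 (bits m) a"
proof -
  have "S2 (bits m) (apply_oracle_layer n I m qs a) = (\<Sum>y\<in>bits m. (\<lambda>z. (cmod (a z))\<^sup>2) (Pm n I qs y))"
    unfolding S2_def by (intro sum.cong refl) (auto simp: oracle_eq)
  also have "\<dots> = S2 (bits m) a"
    unfolding S2_def by (rule sum_reindex_endo) (use Pm_inj[OF assms] in auto)
  finally show ?thesis .
qed

lemma cmod_diff_sq: "(cmod (a - b))\<^sup>2 \<le> 2 * (cmod a)\<^sup>2 + 2 * (cmod b)\<^sup>2"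
proof -
  have "cmod (a - b) \<le> cmod a + cmod b" by (rule norm_triangle_ineq4)
  then have "(cmod (a - b))\<^sup>2 \<le> (cmod a + cmod b)\<^sup>2" by (simp add: power_mono)
  also have "\<dots> \<le> 2 * (cmod a)\<^sup>2 + 2 * (cmod b)\<^sup>2"
  proof -
    have "0 \<le> (cmod a - cmod b)\<^sup>2" by simp
    then show ?thesis unfolding power2_diff power2_sum by linarith
  qed
  finally show ?thesis .
qed

lemma oracle_S2_two:
  assumes "QOK n d m qs" "validI n d I" "validI n d J"
  defines "Bs \<equiv> {y\<in>bits m. \<exists>q\<in>set qs. ans n I q y \<noteq> ans n J q y}"
  shows "S2 (bits m) (\<lambda>y. apply_oracle_layer n I m qs \<phi> y - apply_oracle_layer n J m qs \<phi> y)
       \<le> 4 * S2 Bs \<phi>"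
proof -
  have Bsub: "Bs \<subseteq> bits m" by (auto simp: Bs_def)
  have fin: "finite Bs" by (rule finite_subset[OF Bsub finite_bits])
  have invI: "Pm n K qs ` Bs \<subseteq> Bs" for K
  proof
    fix z assume "z \<in> Pm n K qs ` Bs"
    then obtain y where y: "y \<in> Bs" "z = Pm n K qs y" by auto
    then obtain q where q: "q \<in> set qs" "ans n I q y \<noteq> ans n J q y" by (auto simp: Bs_def)
    have "ans n I q z = ans n I q y" "ans n J q z = ans n J q y"
      using Pm_ans[OF assms(1) q(1)] y by auto
    moreover have "z \<in> bits m" using y Bsub by auto
    ultimately have "ans n I q z \<noteq> ans n J q z" "z \<in> bits m" using q by auto
    then show "z \<in> Bs" using q(1) unfolding Bs_def by blast
  qed
  have "S2 (bits m) (\<lambda>y. apply_oracle_layer n I m qs \<phi> y - apply_oracle_layer n J m qs \<phi> y)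
      = (\<Sum>y\<in>bits m. (cmod (\<phi> (Pm n I qs y) - \<phi> (Pm n J qs y)))\<^sup>2)"
    unfolding S2_def by (intro sum.cong refl) (auto simp: oracle_eq)
  also have "\<dots> = (\<Sum>y\<in>Bs. (cmod (\<phi> (Pm n I qs y) - \<phi> (Pm n J qs y)))\<^sup>2)"
  proof (rule sum.mono_neutral_right[OF finite_bits Bsub])
    show "\<forall>y\<in>bits m - Bs. (cmod (\<phi> (Pm n I qs y) - \<phi> (Pm n J qs y)))\<^sup>2 = 0"
    proof
      fix y assume "y \<in> bits m - Bs"
      then have "\<forall>q\<in>set qs. ans n I q y = ans n J q y" by (auto simp: Bs_def)
      then have "Pm n I qs y = Pm n J qs y" by (rule Pm_same[OF assms(1)])
      then show "(cmod (\<phi> (Pm n I qs y) - \<phi> (Pm n J qs y)))\<^sup>2 = 0" by simp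
    qed
  qed
  also have "\<dots> \<le> (\<Sum>y\<in>Bs. 2 * (cmod (\<phi> (Pm n I qs y)))\<^sup>2 + 2 * (cmod (\<phi> (Pm n J qs y)))\<^sup>2)"
    by (intro sum_mono cmod_diff_sq)
  also have "\<dots> = 2 * (\<Sum>y\<in>Bs. (\<lambda>z. (cmod (\<phi> z))\<^sup>2) (Pm n I qs y)) + 2 * (\<Sum>y\<in>Bs. (\<lambda>z. (cmod (\<phi> z))\<^sup>2) (Pm n J qs y))"
    by (simp add: sum.distrib sum_distrib_left)
  also have "\<dots> = 4 * S2 Bs \<phi>"
  proof -
    have e1: "(\<Sum>y\<in>Bs. (\<lambda>z. (cmod (\<phi> z))\<^sup>2) (Pm n I qs y)) = S2 Bs \<phi>"
      unfolding S2_def by (rule sum_reindex_endo[OF fin inj_on_subset[OF Pm_inj[OF assms(1,2)] Bsub] invI])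
    have e2: "(\<Sum>y\<in>Bs. (\<lambda>z. (cmod (\<phi> z))\<^sup>2) (Pm n J qs y)) = S2 Bs \<phi>"
      unfolding S2_def by (rule sum_reindex_endo[OF fin inj_on_subset[OF Pm_inj[OF assms(1,3)] Bsub] invI])
    show ?thesis unfolding e1 e2 by simp
  qed
  finally show ?thesis .
qed


definition cut :: "nat \<Rightarrow> sinstance \<Rightarrow> sinstance" where
  "cut k I = (\<lambda>c. if c < k then I c else (fst (I c), []))"

fun irun :: "nat \<Rightarrow> sinstance \<Rightarrow> circuit \<Rightarrow> nat \<Rightarrow> qstate" where
  "irun n I C 0 = apply_layer (nqubits C) (ulayers C 0) (init_state (nqubits C))"
| "irun n I C (Suc k) = apply_layer (nqubits C) (ulayers C (Suc k))
      (apply_oracle_layer n (cut k I) (nqubits C) (olayers C k) (irun n I C k))"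

lemma validI_cut: "validI n d I \<Longrightarrow> validI n d (cut k I)"
  by (simp add: validI_def cut_def)

lemma QOK_layer: "valid_oracle_layer n d m qs \<Longrightarrow> QOK n d m qs"
  unfolding QOK_def
proof (intro conjI ballI)
  assume v: "valid_oracle_layer n d m qs"
  then show "\<And>q. q \<in> set qs \<Longrightarrow> valid_query n d m q" by (simp add: valid_oracle_layer_def)
  fix q q' assume q: "q \<in> set qs" and q': "q' \<in> set qs"
  show "set (qx q) \<inter> set (qa q') = {}"
  proof (cases "q = q'")
    case True
    have "valid_query n d m q" using v q by (simp add: valid_oracle_layer_def)
    then show ?thesis using True vq_facts(3) by blast
  next
    case False
    obtain i j where "i < length qs" "j < length qs" "qs ! i = q" "qs ! j = q'"
      using q q' by (auto simp: in_set_conv_nth)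
    moreover then have "i \<noteq> j" using False by auto
    ultimately have "query_qubits q \<inter> query_qubits q' = {}" using v by (auto simp: valid_oracle_layer_def)
    then show ?thesis by (cases q; cases q') (auto simp: query_qubits_def)
  qed
qed

lemma length_layer_le:
  assumes "valid_oracle_layer n d m qs"
  shows "length qs \<le> m"
proof -
  let ?h = "\<lambda>j. hd (qa (qs ! j))"
  have ne: "j < length qs \<Longrightarrow> qa (qs ! j) \<noteq> []" for j
    using assms vq_facts(4)[of n d m "qs ! j"] by (auto simp: valid_oracle_layer_def)
  have inq: "j < length qs \<Longrightarrow> ?h j \<in> query_qubits (qs ! j)" for j
    using ne[of j] by (cases "qs ! j") (auto simp: query_qubits_def)
  have "inj_on ?h {..<length qs}"
  proof (rule inj_onI)
    fix i j assume i: "i \<in> {..<length qs}" and j: "j \<in> {..<length qs}" and e: "?h i = ?h j"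
    show "i = j"
    proof (rule ccontr)
      assume "i \<noteq> j"
      then have "query_qubits (qs ! i) \<inter> query_qubits (qs ! j) = {}" using assms i j
        by (auto simp: valid_oracle_layer_def)
      then show False using inq[of i] inq[of j] i j e by auto
    qed
  qed
  moreover have "?h ` {..<length qs} \<subseteq> {..<m}"
  proof
    fix p assume "p \<in> ?h ` {..<length qs}"
    then obtain j where j: "j < length qs" "p = ?h j" by auto
    have "qs ! j \<in> set qs" using j by simp
    then have "valid_query n d m (qs ! j)" using assms by (auto simp: valid_oracle_layer_def)
    then show "p \<in> {..<m}" using vq_facts(2)[of n d m "qs ! j"] ne[OF j(1)] j by auto
  qed
  ultimately show ?thesis using card_inj_on_le[of ?h "{..<length qs}" "{..<m}"] by simp
qed

lemma S2_init: "S2 (bits m) (init_state m) = 1"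
proof -
  have "S2 (bits m) (init_state m) = (\<Sum>y\<in>bits m. if y = replicate m False then 1 else 0)"
    unfolding S2_def init_state_def by (intro sum.cong refl) auto
  also have "\<dots> = 1" by (simp add: sum.delta)
  finally show ?thesis .
qed

definition NN :: "bool list set \<Rightarrow> qstate \<Rightarrow> real" where
  "NN A \<psi> = sqrt (S2 A \<psi>)"

lemma NN_L2: "NN A \<psi> = L2_set (\<lambda>y. cmod (\<psi> y)) A"
  by (simp add: NN_def S2_def L2_set_def)

lemma NN_tri: "NN A (\<lambda>y. a y - c y) \<le> NN A (\<lambda>y. a y - b y) + NN A (\<lambda>y. b y - c y)"
proof -
  have "L2_set (\<lambda>y. cmod (a y - c y)) A \<le> L2_set (\<lambda>y. cmod (a y - b y) + cmod (b y - c y)) A"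
    by (rule L2_set_mono) (auto intro: order_trans[OF _ norm_triangle_ineq] simp: norm_triangle_sub)
  also have "\<dots> \<le> L2_set (\<lambda>y. cmod (a y - b y)) A + L2_set (\<lambda>y. cmod (b y - c y)) A"
    by (rule L2_set_triangle_ineq)
  finally show ?thesis by (simp add: NN_L2)
qed

lemma S2_mono_set: "A \<subseteq> B \<Longrightarrow> finite B \<Longrightarrow> S2 A \<psi> \<le> S2 B \<psi>"
  unfolding S2_def by (rule sum_mono2) auto

lemma S2_nonneg: "0 \<le> S2 A \<psi>" unfolding S2_def by (simp add: sum_nonneg)


lemma ans_cut_diff:
  assumes "n \<ge> 1" "length (qx q) = 2 * n" "ans n I q y \<noteq> ans n (cut k I) q y"
  shows "k < qi q \<and> drop n (get_pos y (qx q)) = snd (I (qi q - 1))"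
proof -
  have "drop n (get_pos y (qx q)) \<noteq> []" using assms(1,2) by (simp)
  then show ?thesis using assms(3)
    by (auto simp: ans_def Lfun_def cut_def split: if_splits)
qed

lemma ans_cut_dep:
  assumes "n \<ge> 1" "length (qx q) = 2 * n" "\<forall>c\<le>k. I c = I' c"
  shows "ans n (cut k I) q y = ans n (cut k I') q y"
proof -
  have "drop n (get_pos y (qx q)) \<noteq> []" using assms(1,2) by (simp)
  then show ?thesis using assms(3)
    by (auto simp: ans_def Lfun_def cut_def split: if_splits)
qed

lemma oracle_cong:
  assumes "\<forall>q\<in>set qs. \<forall>y. ans n I q y = ans n J q y"
  shows "apply_oracle_layer n I m qs \<psi> = apply_oracle_layer n J m qs \<psi>"
  using assms unfolding apply_oracle_layer_def
proof (induction qs arbitrary: \<psi>)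
  case (Cons q qs)
  have pw: "\<And>y. piq n I q y = piq n J q y" using Cons.prems by (auto simp: piq_def)
  have "apply_query n I m q \<psi> = apply_query n J m q \<psi>"
    unfolding apply_query_eq pw ..
  then show ?case using Cons by simp
qed simp

lemma irun_dep:
  assumes "n \<ge> 1"
  shows "(\<forall>j<k. \<forall>q\<in>set (olayers C j). length (qx q) = 2 * n) \<longrightarrow> (\<forall>c<k. I c = I' c) \<longrightarrow> irun n I C k = irun n I' C k"
proof (induction k)
  case 0 then show ?case by simp
next
  case (Suc k)
  show ?case
  proof (intro impI)
    assume a: "\<forall>j<Suc k. \<forall>q\<in>set (olayers C j). length (qx q) = 2 * n" "\<forall>c<Suc k. I c = I' c"
    have a1: "\<forall>j<k. \<forall>q\<in>set (olayers C j). length (qx q) = 2 * n" using a(1) less_SucI by blast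
    have a2: "\<forall>c<k. I c = I' c" using a(2) less_SucI by blast
    have ih: "irun n I C k = irun n I' C k" using Suc a1 a2 by blast
    have "apply_oracle_layer n (cut k I) (nqubits C) (olayers C k) \<psi> =
          apply_oracle_layer n (cut k I') (nqubits C) (olayers C k) \<psi>" for \<psi>
    proof (rule oracle_cong, intro ballI allI)
      fix q y assume q: "q \<in> set (olayers C k)"
      have l: "length (qx q) = 2 * n" using a(1) q by blast
      have "\<forall>c\<le>k. I c = I' c" using a(2) by (simp add: less_Suc_eq_le)
      then show "ans n (cut k I) q y = ans n (cut k I') q y" by (rule ans_cut_dep[OF assms(1) l])
    qed
    then show "irun n I C (Suc k) = irun n I' C (Suc k)" using ih by simp
  qed
qed

lemma valid_circuit_QOK: "valid_circuit n d C \<Longrightarrow> j < d \<Longrightarrow> QOK n d (nqubits C) (olayers C j)"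
  by (simp add: valid_circuit_def QOK_layer)

lemma valid_circuit_len: "valid_circuit n d C \<Longrightarrow> j < d \<Longrightarrow> q \<in> set (olayers C j) \<Longrightarrow> length (qx q) = 2 * n"
proof -
  assume a: "valid_circuit n d C" "j < d" "q \<in> set (olayers C j)"
  then have "valid_query n d (nqubits C) q" using valid_circuit_QOK[OF a(1,2)] by (auto simp: QOK_def)
  then show ?thesis by (rule vq_facts(5))
qed

lemma hybrid:
  assumes vc: "valid_circuit n d C" and vI: "validI n d I" and kd: "k \<le> d"
  defines "m \<equiv> nqubits C"
  shows "NN (bits m) (\<lambda>y. run n I C k y - irun n I C k y) \<le>
    (\<Sum>j<k. NN (bits m) (\<lambda>y. apply_oracle_layer n I m (olayers C j) (irun n I C j) y
        - apply_oracle_layer n (cut j I) m (olayers C j) (irun n I C j) y))"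
  using kd
proof (induction k)
  case 0 then show ?case by (simp add: NN_def S2_def)
next
  case (Suc k)
  let ?U = "ulayers C (Suc k)" and ?Q = "olayers C k"
  let ?r = "run n I C k" and ?i = "irun n I C k"
  let ?A = "apply_oracle_layer n I m ?Q ?r" and ?B = "apply_oracle_layer n I m ?Q ?i"
    and ?D = "apply_oracle_layer n (cut k I) m ?Q ?i"
  have kd: "k < d" using Suc by simp
  have vl: "valid_layer m ?U" using vc Suc.prems by (simp add: valid_circuit_def m_def)
  have qok: "QOK n d m ?Q" using valid_circuit_QOK[OF vc kd] by (simp add: m_def)
  have "(\<lambda>y. run n I C (Suc k) y - irun n I C (Suc k) y) = apply_layer m ?U (\<lambda>y. ?A y - ?D y)"
    by (simp add: layer_lin m_def)
  then have "NN (bits m) (\<lambda>y. run n I C (Suc k) y - irun n I C (Suc k) y) = NN (bits m) (\<lambda>y. ?A y - ?D y)"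
    by (simp add: NN_def layer_S2[OF vl])
  also have "\<dots> \<le> NN (bits m) (\<lambda>y. ?A y - ?B y) + NN (bits m) (\<lambda>y. ?B y - ?D y)"
    by (rule NN_tri)
  also have "NN (bits m) (\<lambda>y. ?A y - ?B y) = NN (bits m) (\<lambda>y. ?r y - ?i y)"
    by (simp add: NN_def oracle_S2_diff[OF qok vI])
  also have "\<dots> \<le> (\<Sum>j<k. NN (bits m) (\<lambda>y. apply_oracle_layer n I m (olayers C j) (irun n I C j) y
        - apply_oracle_layer n (cut j I) m (olayers C j) (irun n I C j) y))"
    using Suc by simp
  finally show ?case by simp
qed

definition W :: "nat \<Rightarrow> sinstance \<Rightarrow> circuit \<Rightarrow> nat \<Rightarrow> real" where
  "W n I C j = (\<Sum>q\<in>set (olayers C j). \<Sum>y\<in>bits (nqubits C).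
     if j < qi q \<and> drop n (get_pos y (qx q)) = snd (I (qi q - 1)) then (cmod (irun n I C j y))\<^sup>2 else 0)"

lemma bad_bound:
  assumes vc: "valid_circuit n d C" and vI: "validI n d I" and jd: "j < d" and n1: "n \<ge> 1"
  defines "m \<equiv> nqubits C"
  shows "S2 (bits m) (\<lambda>y. apply_oracle_layer n I m (olayers C j) (irun n I C j) y
        - apply_oracle_layer n (cut j I) m (olayers C j) (irun n I C j) y) \<le> 4 * W n I C j"
proof -
  let ?Q = "olayers C j" and ?\<phi> = "irun n I C j"
  define Bs where "Bs = {y\<in>bits m. \<exists>q\<in>set ?Q. ans n I q y \<noteq> ans n (cut j I) q y}"
  have qok: "QOK n d m ?Q" using valid_circuit_QOK[OF vc jd] by (simp add: m_def)
  have 1: "S2 (bits m) (\<lambda>y. apply_oracle_layer n I m ?Q ?\<phi> y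
        - apply_oracle_layer n (cut j I) m ?Q ?\<phi> y) \<le> 4 * S2 Bs ?\<phi>"
    unfolding Bs_def by (rule oracle_S2_two[OF qok vI validI_cut[OF vI]])
  have "S2 Bs ?\<phi> = (\<Sum>y\<in>bits m. if y \<in> Bs then (cmod (?\<phi> y))\<^sup>2 else 0)"
  proof -
    have "Bs = bits m \<inter> Bs" by (auto simp: Bs_def)
    then show ?thesis unfolding S2_def using sum.inter_restrict[OF finite_bits, of "\<lambda>y. (cmod (?\<phi> y))\<^sup>2" m Bs] by simp
  qed
  also have "\<dots> \<le> (\<Sum>y\<in>bits m. \<Sum>q\<in>set ?Q.
     if j < qi q \<and> drop n (get_pos y (qx q)) = snd (I (qi q - 1)) then (cmod (?\<phi> y))\<^sup>2 else 0)"
  proof (rule sum_mono)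
    fix y assume y: "y \<in> bits m"
    show "(if y \<in> Bs then (cmod (?\<phi> y))\<^sup>2 else 0) \<le> (\<Sum>q\<in>set ?Q.
     if j < qi q \<and> drop n (get_pos y (qx q)) = snd (I (qi q - 1)) then (cmod (?\<phi> y))\<^sup>2 else 0)"
    proof (cases "y \<in> Bs")
      case True
      then obtain q where q: "q \<in> set ?Q" "ans n I q y \<noteq> ans n (cut j I) q y" by (auto simp: Bs_def)
      have "j < qi q \<and> drop n (get_pos y (qx q)) = snd (I (qi q - 1))"
        by (rule ans_cut_diff[OF n1 valid_circuit_len[OF vc jd q(1)] q(2)])
      then have "(cmod (?\<phi> y))\<^sup>2 = (\<lambda>q. if j < qi q \<and> drop n (get_pos y (qx q)) = snd (I (qi q - 1)) then (cmod (?\<phi> y))\<^sup>2 else 0) q"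
        by simp
      also have "\<dots> \<le> (\<Sum>q\<in>set ?Q.
     if j < qi q \<and> drop n (get_pos y (qx q)) = snd (I (qi q - 1)) then (cmod (?\<phi> y))\<^sup>2 else 0)"
        by (rule member_le_sum[OF q(1)]) auto
      finally show ?thesis using True by simp
    qed (simp add: sum_nonneg)
  qed
  also have "\<dots> = W n I C j"
    unfolding W_def m_def by (rule sum.swap)
  finally show ?thesis using 1 by simp
qed


lemma NN_sq: "(NN A \<psi>)\<^sup>2 = S2 A \<psi>"
  by (simp add: NN_def S2_nonneg)

lemma NN_nonneg: "0 \<le> NN A \<psi>" by (simp add: NN_def S2_nonneg)

lemma inst_bound:
  fixes t :: "bool list"
  assumes vc: "valid_circuit n d C" and vI: "validI n d I" and n1: "n \<ge> 1"
  defines "m \<equiv> nqubits C"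
  defines "T \<equiv> {y\<in>bits m. get_pos y (outq C) = t}"
  shows "output_prob n d I C t \<le> 2 * S2 T (irun n I C d) + 8 * d * (\<Sum>j<d. W n I C j)"
proof -
  let ?r = "run n I C d" and ?i = "irun n I C d"
  define e where "e j = NN (bits m) (\<lambda>y. apply_oracle_layer n I m (olayers C j) (irun n I C j) y
        - apply_oracle_layer n (cut j I) m (olayers C j) (irun n I C j) y)" for j
  define D where "D = NN (bits m) (\<lambda>y. ?r y - ?i y)"
  have op: "output_prob n d I C t = S2 T ?r"
    unfolding output_prob_def S2_def T_def m_def by (rule sum.inter_filter[OF finite_bits, symmetric])
  have Tsub: "T \<subseteq> bits m" by (auto simp: T_def)
  have "NN T ?r \<le> NN T ?i + NN T (\<lambda>y. ?r y - ?i y)"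
    using NN_tri[of T ?r "\<lambda>_. 0" ?i] by (simp add: add.commute)
  also have "NN T (\<lambda>y. ?r y - ?i y) \<le> D"
    unfolding D_def NN_def by (rule real_sqrt_le_mono, rule S2_mono_set[OF Tsub finite_bits])
  finally have 1: "NN T ?r \<le> NN T ?i + D" by simp
  have D0: "0 \<le> D" by (simp add: D_def NN_nonneg)
  have "S2 T ?r = (NN T ?r)\<^sup>2" by (simp add: NN_sq)
  also have "\<dots> \<le> (NN T ?i + D)\<^sup>2" by (rule power_mono[OF 1 NN_nonneg])
  also have "\<dots> \<le> 2 * (NN T ?i)\<^sup>2 + 2 * D\<^sup>2"
  proof -
    have "0 \<le> (NN T ?i - D)\<^sup>2" by simp
    then show ?thesis unfolding power2_diff power2_sum by linarith
  qed
  also have "(NN T ?i)\<^sup>2 = S2 T ?i" by (rule NN_sq)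
  finally have 2: "S2 T ?r \<le> 2 * S2 T ?i + 2 * D\<^sup>2" .
  have "D \<le> (\<Sum>j<d. e j)" unfolding D_def e_def m_def by (rule hybrid[OF vc vI order_refl])
  then have "D\<^sup>2 \<le> (\<Sum>j<d. e j)\<^sup>2" by (rule power_mono[OF _ D0])
  also have "\<dots> \<le> (\<Sum>j<d. (e j)\<^sup>2) * d"
    using sum_squared_le_sum_of_squares[of e "{..<d}"] by simp
  also have "\<dots> \<le> (\<Sum>j<d. 4 * W n I C j) * d"
  proof (rule mult_right_mono[OF sum_mono])
    fix j assume "j \<in> {..<d}"
    then show "(e j)\<^sup>2 \<le> 4 * W n I C j"
      unfolding e_def NN_sq m_def by (intro bad_bound[OF vc vI _ n1]) simp
  qed simp
  finally have 3: "D\<^sup>2 \<le> 4 * d * (\<Sum>j<d. W n I C j)" by (simp add: sum_distrib_left mult_ac)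
  show ?thesis using op 2 3 by linarith
qed


lemma xorb_comm: "xorb x y = xorb y x"
  by (rule nth_equalityI) auto
lemma xorb_assoc: "length x = length y \<Longrightarrow> length y = length z \<Longrightarrow> xorb (xorb x y) z = xorb x (xorb y z)"
  by (rule nth_equalityI) auto
lemma xorb_self: "xorb x x = replicate (length x) False"
  by (rule nth_equalityI) auto
lemma xorb_zero: "xorb x (replicate (length x) False) = x"
  by (rule nth_equalityI) auto
lemma xorb_zero': "length x = k \<Longrightarrow> xorb x (replicate k False) = x"
  using xorb_zero by blast

lemma finite_simon_set: "finite (simon_set n)"
proof -
  have "simon_set n \<subseteq> (bits n \<rightarrow>\<^sub>E bits n) \<times> bits n"
    by (auto simp: simon_set_def simon_fun_def)
  moreover have "finite ((bits n \<rightarrow>\<^sub>E bits n) \<times> bits n)"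
    by (intro finite_cartesian_product finite_PiE finite_bits)
  ultimately show ?thesis by (rule finite_subset)
qed

lemma simon_set_ne:
  assumes "n \<ge> 1"
  shows "simon_set n \<noteq> {}"
proof -
  define s0 where "s0 = True # replicate (n - 1) False"
  define f0 where "f0 = restrict (\<lambda>x. False # tl x) (bits n)"
  have xs0: "xorb x s0 = (\<not> hd x) # tl x" if "length x = n" for x
  proof -
    obtain a xs where x: "x = a # xs" using \<open>length x = n\<close> assms by (cases x) auto
    have "length xs = n - 1" using that x by simp
    then show ?thesis unfolding s0_def x
      by (intro nth_equalityI) (auto simp: nth_Cons' xorb_def)
  qed
  have "simon_fun n f0 s0"
    unfolding simon_fun_def
  proof (intro conjI ballI)
    show "s0 \<in> bits n" using assms by (simp add: s0_def)
    show "s0 \<noteq> replicate n False" using assms by (cases n) (auto simp: s0_def)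
    show "f0 \<in> bits n \<rightarrow>\<^sub>E bits n" using assms by (auto simp: f0_def)
    fix x y assume x: "x \<in> bits n" and y: "y \<in> bits n"
    obtain a xs where xa: "x = a # xs" using x assms by (cases x) auto
    obtain b ys where yb: "y = b # ys" using y assms by (cases y) auto
    show "(f0 x = f0 y) = (y = x \<or> y = xorb x s0)"
      using x y by (auto simp: f0_def xs0 xa yb)
  qed
  then show ?thesis by (auto simp: simon_set_def)
qed

definition good :: "nat \<Rightarrow> (bool list \<Rightarrow> bool list) \<Rightarrow> bool list \<Rightarrow> bool list \<Rightarrow> bool" where
  "good n g a b \<longleftrightarrow> (\<forall>x\<in>bits n. g x \<in> bits n) \<and> inj_on g (bits n) \<and> (\<forall>z\<in>bits n. \<exists>x\<in>bits n. g x = z)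
     \<and> (\<forall>x\<in>bits n. g (xorb x a) = xorb (g x) b)"

lemma good_comp:
  assumes "good n g1 a b" "good n g2 b c" "a \<in> bits n"
  shows "good n (g2 \<circ> g1) a c"
  unfolding good_def
proof (intro conjI ballI)
  show "\<And>x. x \<in> bits n \<Longrightarrow> (g2 \<circ> g1) x \<in> bits n" using assms by (auto simp: good_def)
  show "inj_on (g2 \<circ> g1) (bits n)" using assms
    by (auto simp: good_def intro!: comp_inj_on inj_on_subset[of g2 "bits n"])
  fix z assume z: "z \<in> bits n"
  then obtain w where w: "w \<in> bits n" "g2 w = z" using assms(2) unfolding good_def by blast
  then obtain x where "x \<in> bits n" "g1 x = w" using assms(1) unfolding good_def by blast
  then show "\<exists>x\<in>bits n. (g2 \<circ> g1) x = z" using w by auto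
next
  fix x assume x: "x \<in> bits n"
  have "xorb x a \<in> bits n" using x assms(3) by simp
  then show "(g2 \<circ> g1) (xorb x a) = xorb ((g2 \<circ> g1) x) c"
    using assms x by (auto simp: good_def)
qed

definition tv :: "bool list \<Rightarrow> nat \<Rightarrow> bool list \<Rightarrow> bool list" where
  "tv u p x = (if x ! p then xorb x u else x)"

lemma good_tv:
  assumes a: "a \<in> bits n" and b: "b \<in> bits n" and p: "p < n" "a ! p" "b ! p"
  shows "good n (tv (xorb a b) p) a b"
proof -
  let ?u = "xorb a b"
  have lu: "length ?u = n" using a b by simp
  have up: "\<not> ?u ! p" using a b p by simp
  have inv: "tv ?u p (tv ?u p x) = x" if "length x = n" for x
  proof (cases "x ! p")
    case True
    have "(xorb x ?u) ! p = x ! p" using that lu up p by simp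
    then show ?thesis using True that lu
      by (simp add: tv_def xorb_assoc xorb_self xorb_zero')
  qed (simp add: tv_def)
  have len: "length (tv ?u p x) = n" if "length x = n" for x using that lu by (simp add: tv_def)
  show ?thesis unfolding good_def
  proof (intro conjI ballI)
    show "\<And>x. x \<in> bits n \<Longrightarrow> tv ?u p x \<in> bits n" using len by simp
    show "inj_on (tv ?u p) (bits n)"
      by (rule inj_onI) (metis inv bits_iff)
    fix z assume "z \<in> bits n" then show "\<exists>x\<in>bits n. tv ?u p x = z"
      using inv len by (intro bexI[of _ "tv ?u p z"]) auto
  next
    fix x assume x: "x \<in> bits n"
    show "tv ?u p (xorb x a) = xorb (tv ?u p x) b"
      using x a b p by (intro nth_equalityI) (auto simp: tv_def)
  qed
qed

lemma nonzero_ex: "t \<in> bits n \<Longrightarrow> t \<noteq> replicate n False \<Longrightarrow> \<exists>p<n. t ! p"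
  by (metis bits_iff in_set_conv_nth replicate_eqI)

lemma good_ex:
  assumes "t' \<in> bits n" "t' \<noteq> replicate n False" "t \<in> bits n" "t \<noteq> replicate n False"
  shows "\<exists>g. good n g t' t"
proof (cases "\<exists>p<n. t' ! p \<and> t ! p")
  case True
  then obtain p where "p < n" "t' ! p" "t ! p" by auto
  then show ?thesis using good_tv assms by blast
next
  case False
  obtain p where p: "p < n" "t' ! p" using nonzero_ex assms(1,2) by blast
  obtain q where q: "q < n" "t ! q" using nonzero_ex assms(3,4) by blast
  have pq: "p \<noteq> q" using False p q by auto
  define w where "w = t'[q := True]"
  have w: "w \<in> bits n" "w ! p" "w ! q" using assms p q pq by (auto simp: w_def)
  obtain g1 where g1: "good n g1 t' w" using good_tv[OF assms(1) w(1) p w(2)] by blast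
  obtain g2 where g2: "good n g2 w t" using good_tv[OF w(1) assms(3) q(1) w(3) q(2)] by blast
  show ?thesis using good_comp[OF g1 g2 assms(1)] by blast
qed

lemma count_le:
  assumes "t' \<in> bits n" "t' \<noteq> replicate n False"
  shows "card {f. simon_fun n f t} \<le> card {f. simon_fun n f t'}"
proof (cases "{f. simon_fun n f t} = {}")
  case False
  then obtain f1 where "simon_fun n f1 t" by auto
  then have t: "t \<in> bits n" "t \<noteq> replicate n False" by (auto simp: simon_fun_def)
  obtain g where g: "good n g t' t" using good_ex[OF assms t] by blast
  let ?\<Phi> = "\<lambda>f. restrict (f \<circ> g) (bits n)"
  have fin: "finite {f. simon_fun n f t'}"
  proof -
    have "{f. simon_fun n f t'} \<subseteq> bits n \<rightarrow>\<^sub>E bits n" by (auto simp: simon_fun_def)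
    then show ?thesis by (rule finite_subset) (intro finite_PiE finite_bits)
  qed
  have gb: "x \<in> bits n \<Longrightarrow> g x \<in> bits n" for x using g by (auto simp: good_def)
  have ginj: "x \<in> bits n \<Longrightarrow> y \<in> bits n \<Longrightarrow> g x = g y \<Longrightarrow> x = y" for x y
    using g by (auto simp: good_def dest: inj_onD)
  have gx: "x \<in> bits n \<Longrightarrow> g (xorb x t') = xorb (g x) t" for x using g by (auto simp: good_def)
  have maps: "?\<Phi> f \<in> {f. simon_fun n f t'}" if f: "simon_fun n f t" for f
  proof -
    have fb: "f \<in> bits n \<rightarrow>\<^sub>E bits n" and fp: "\<forall>x\<in>bits n. \<forall>y\<in>bits n. f x = f y \<longleftrightarrow> (y = x \<or> y = xorb x t)"
      using f by (auto simp: simon_fun_def)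
    have "simon_fun n (?\<Phi> f) t'"
      unfolding simon_fun_def
    proof (intro conjI ballI)
      show "t' \<in> bits n" "t' \<noteq> replicate n False" by (fact assms)+
      show "?\<Phi> f \<in> bits n \<rightarrow>\<^sub>E bits n" using fb gb by auto
      fix x y assume x: "x \<in> bits n" and y: "y \<in> bits n"
      have xt: "xorb x t' \<in> bits n" using x assms by simp
      have "?\<Phi> f x = ?\<Phi> f y \<longleftrightarrow> f (g x) = f (g y)" using x y by simp
      also have "\<dots> \<longleftrightarrow> (g y = g x \<or> g y = xorb (g x) t)" using fp gb x y by blast
      also have "\<dots> \<longleftrightarrow> (y = x \<or> y = xorb x t')"
        using ginj[OF y x] ginj[OF y xt] gx[OF x] by auto
      finally show "(?\<Phi> f x = ?\<Phi> f y) = (y = x \<or> y = xorb x t')" .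
    qed
    then show ?thesis by simp
  qed
  have inj: "inj_on ?\<Phi> {f. simon_fun n f t}"
  proof (rule inj_onI)
    fix f1 f2 assume f1: "f1 \<in> {f. simon_fun n f t}" and f2: "f2 \<in> {f. simon_fun n f t}" and e: "?\<Phi> f1 = ?\<Phi> f2"
    have "f1 z = f2 z" if z: "z \<in> bits n" for z
    proof -
      obtain x where x: "x \<in> bits n" "g x = z" using g z unfolding good_def by blast
      have "?\<Phi> f1 x = ?\<Phi> f2 x" using e by simp
      then show ?thesis using x by simp
    qed
    moreover have "f1 \<in> bits n \<rightarrow>\<^sub>E bits n" "f2 \<in> bits n \<rightarrow>\<^sub>E bits n" using f1 f2 by (auto simp: simon_fun_def)
    ultimately show "f1 = f2" by (intro PiE_ext) auto
  qed
  show ?thesis using card_inj_on_le[OF inj _ fin] maps by blast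
qed simp

lemma count_eq: "card {v\<in>simon_set n. snd v = t} = card {f. simon_fun n f t}"
proof -
  have "{v\<in>simon_set n. snd v = t} = (\<lambda>f. (f, t)) ` {f. simon_fun n f t}"
    by (auto simp: simon_set_def)
  then show ?thesis by (simp add: card_image inj_on_def)
qed

lemma count_bound:
  assumes n1: "n \<ge> 1"
  shows "real (card {v\<in>simon_set n. snd v = t}) \<le> real (card (simon_set n)) / (2 ^ n - 1)"
proof -
  define NZ where "NZ = bits n - {replicate n False}"
  have cNZ: "card NZ = 2 ^ n - 1" unfolding NZ_def by (simp add: card_Diff_singleton card_bits)
  have un: "simon_set n = (\<Union>t'\<in>NZ. {v\<in>simon_set n. snd v = t'})"
    by (auto simp: NZ_def simon_set_def simon_fun_def)
  have cs: "card (simon_set n) = (\<Sum>t'\<in>NZ. card {v\<in>simon_set n. snd v = t'})"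
    by (subst un, rule card_UN_disjoint) (auto simp: NZ_def intro: finite_subset[OF _ finite_simon_set])
  have "(\<Sum>t'\<in>NZ. card {v\<in>simon_set n. snd v = t}) \<le> (\<Sum>t'\<in>NZ. card {v\<in>simon_set n. snd v = t'})"
    by (intro sum_mono) (auto simp: count_eq NZ_def intro: count_le)
  then have "card {v\<in>simon_set n. snd v = t} * (2 ^ n - 1) \<le> card (simon_set n)"
    using cs cNZ by (simp add: mult.commute)
  then have "real (card {v\<in>simon_set n. snd v = t}) * (2 ^ n - 1) \<le> real (card (simon_set n))"
    using n1 by (metis (mono_tags) of_nat_le_iff of_nat_mult of_nat_diff one_le_power one_le_numeral of_nat_1 of_nat_numeral of_nat_power)
  moreover have "(0::real) < 2 ^ n - 1"
  proof -
    have "(2::real) ^ 1 \<le> 2 ^ n" by (rule power_increasing[OF n1]) simp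
    then show ?thesis by simp
  qed
  ultimately show ?thesis by (simp add: pos_le_divide_eq)
qed


lemma sum_PiE_split:
  fixes h :: "sinstance \<Rightarrow> real"
  assumes "c \<le> d"
  shows "(\<Sum>I\<in>serial_instances n d. h I) =
    (\<Sum>I'\<in>PiE ({..d} - {c}) (\<lambda>_. simon_set n). \<Sum>v\<in>simon_set n. h (I'(c := v)))"
    and "card (serial_instances n d) = card (simon_set n) * card (PiE ({..d} - {c}) (\<lambda>_. simon_set n))"
proof -
  let ?P' = "PiE ({..d} - {c}) (\<lambda>_. simon_set n)"
  have eq: "serial_instances n d = (\<lambda>(y, g). g(c := y)) ` (simon_set n \<times> ?P')"
  proof -
    have "{..d} = insert c ({..d} - {c})" using assms by auto
    then show ?thesis unfolding serial_instances_def by (metis PiE_insert_eq)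
  qed
  have inj: "inj_on (\<lambda>(y, g). g(c := y)) (simon_set n \<times> ?P')"
    using inj_combinator[of c "{..d} - {c}" "\<lambda>_. simon_set n"] by simp
  have "(\<Sum>I\<in>serial_instances n d. h I) = (\<Sum>yg\<in>simon_set n \<times> ?P'. h ((\<lambda>(y, g). g(c := y)) yg))"
    unfolding eq by (subst sum.reindex[OF inj]) (simp add: comp_def)
  also have "\<dots> = (\<Sum>v\<in>simon_set n. \<Sum>I'\<in>?P'. h (I'(c := v)))"
    by (simp add: sum.cartesian_product case_prod_unfold)
  also have "\<dots> = (\<Sum>I'\<in>?P'. \<Sum>v\<in>simon_set n. h (I'(c := v)))"
    by (rule sum.swap)
  finally show "(\<Sum>I\<in>serial_instances n d. h I) = (\<Sum>I'\<in>?P'. \<Sum>v\<in>simon_set n. h (I'(c := v)))" .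
  show "card (serial_instances n d) = card (simon_set n) * card ?P'"
    unfolding eq by (simp add: card_image[OF inj] card_cartesian_product)
qed

lemma avg:
  fixes F :: "sinstance \<Rightarrow> bool list \<Rightarrow> real" and g :: "bool list \<Rightarrow> bool list"
  assumes n1: "n \<ge> 1" and cd: "c \<le> d" and finY: "finite Y"
    and Fnn: "\<And>I y. 0 \<le> F I y"
    and Fle: "\<And>I. I \<in> serial_instances n d \<Longrightarrow> (\<Sum>y\<in>Y. F I y) \<le> 1"
    and Finv: "\<And>I v. I \<in> serial_instances n d \<Longrightarrow> v \<in> simon_set n \<Longrightarrow> F (I(c := v)) = F I"
  shows "(\<Sum>I\<in>serial_instances n d. \<Sum>y\<in>Y. if g y = snd (I c) then F I y else 0)
     \<le> real (card (serial_instances n d)) / (2 ^ n - 1)"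
proof -
  let ?S = "simon_set n"
  let ?P' = "PiE ({..d} - {c}) (\<lambda>_. ?S)"
  obtain v0 where v0: "v0 \<in> ?S" using simon_set_ne[OF n1] by blast
  have pos: "(0::real) < 2 ^ n - 1"
  proof -
    have "(2::real) ^ 1 \<le> 2 ^ n" by (rule power_increasing[OF n1]) simp
    then show ?thesis by simp
  qed
  define K where "K = real (card ?S) / (2 ^ n - 1)"
  have inner: "(\<Sum>v\<in>?S. \<Sum>y\<in>Y. if g y = snd ((I'(c := v)) c) then F (I'(c := v)) y else 0) \<le> K"
    if I': "I' \<in> ?P'" for I'
  proof -
    let ?I0 = "I'(c := v0)"
    have I0: "?I0 \<in> serial_instances n d"
      using I' v0 cd unfolding serial_instances_def by (auto simp: PiE_iff extensional_def)
    have Fv: "F (I'(c := v)) = F ?I0" if "v \<in> ?S" for v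
      using Finv[OF I0 that] by simp
    have "(\<Sum>v\<in>?S. \<Sum>y\<in>Y. if g y = snd ((I'(c := v)) c) then F (I'(c := v)) y else 0)
        = (\<Sum>y\<in>Y. \<Sum>v\<in>?S. if snd v = g y then F ?I0 y else 0)"
      by (subst sum.swap) (intro sum.cong refl, auto simp: Fv)
    also have "\<dots> = (\<Sum>y\<in>Y. F ?I0 y * real (card {v\<in>?S. snd v = g y}))"
      by (intro sum.cong refl) (simp add: sum.If_cases[OF finite_simon_set] Int_def mult.commute)
    also have "\<dots> \<le> (\<Sum>y\<in>Y. F ?I0 y * K)"
      unfolding K_def by (intro sum_mono mult_left_mono count_bound[OF n1] Fnn)
    also have "\<dots> = (\<Sum>y\<in>Y. F ?I0 y) * K" by (simp add: sum_distrib_right)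
    also have "\<dots> \<le> 1 * K"
      by (rule mult_right_mono[OF Fle[OF I0]]) (use pos in \<open>simp add: K_def\<close>)
    finally show ?thesis by simp
  qed
  have "(\<Sum>I\<in>serial_instances n d. \<Sum>y\<in>Y. if g y = snd (I c) then F I y else 0)
    = (\<Sum>I'\<in>?P'. \<Sum>v\<in>?S. \<Sum>y\<in>Y. if g y = snd ((I'(c := v)) c) then F (I'(c := v)) y else 0)"
    by (rule sum_PiE_split(1)[OF cd])
  also have "\<dots> \<le> (\<Sum>I'\<in>?P'. K)" by (rule sum_mono[OF inner])
  also have "\<dots> = real (card (serial_instances n d)) / (2 ^ n - 1)"
    unfolding K_def sum_PiE_split(2)[OF cd] by simp
  finally show ?thesis .
qed


lemma validI_serial:
  assumes "I \<in> serial_instances n d" shows "validI n d I"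
  unfolding validI_def
proof (intro allI impI)
  fix i and x :: "bool list" assume i: "i \<le> d" and x: "length x = n"
  have "I i \<in> simon_set n" using assms i unfolding serial_instances_def by (simp add: PiE_iff)
  then have "simon_fun n (fst (I i)) (snd (I i))" by (simp add: simon_set_def case_prod_unfold)
  then have "fst (I i) \<in> bits n \<rightarrow>\<^sub>E bits n" unfolding simon_fun_def by (elim conjE) assumption
  moreover have "x \<in> bits n" using x by simp
  ultimately have "fst (I i) x \<in> bits n" by (metis PiE_mem)
  then show "length (fst (I i) x) = n" by simp
qed

lemma irun_S2:
  assumes vc: "valid_circuit n d C" and vI: "validI n d I" and kd: "k \<le> d"
  shows "S2 (bits (nqubits C)) (irun n I C k) = 1"
  using kd
proof (induction k)
  case 0
  have "valid_layer (nqubits C) (ulayers C 0)" using vc by (simp add: valid_circuit_def)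
  then show ?case by (simp add: layer_S2 S2_init)
next
  case (Suc k)
  have vl: "valid_layer (nqubits C) (ulayers C (Suc k))" using vc Suc.prems by (simp add: valid_circuit_def)
  have qok: "QOK n d (nqubits C) (olayers C k)" using valid_circuit_QOK[OF vc] Suc.prems by simp
  show ?case using Suc by (simp add: layer_S2[OF vl] oracle_S2[OF qok validI_cut[OF vI]])
qed

lemma term1:
  assumes vc: "valid_circuit n d C" and n1: "n \<ge> 1"
  shows "(\<Sum>I\<in>serial_instances n d. S2 {y\<in>bits (nqubits C). get_pos y (outq C) = snd (I d)} (irun n I C d))
     \<le> real (card (serial_instances n d)) / (2 ^ n - 1)"
proof -
  have "(\<Sum>I\<in>serial_instances n d. S2 {y\<in>bits (nqubits C). get_pos y (outq C) = snd (I d)} (irun n I C d))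
     = (\<Sum>I\<in>serial_instances n d. \<Sum>y\<in>bits (nqubits C). if get_pos y (outq C) = snd (I d) then (cmod (irun n I C d y))\<^sup>2 else 0)"
    unfolding S2_def by (intro sum.cong refl sum.inter_filter[OF finite_bits])
  also have "\<dots> \<le> real (card (serial_instances n d)) / (2 ^ n - 1)"
  proof (rule avg[OF n1 order_refl finite_bits])
    show "\<And>I y. 0 \<le> (cmod (irun n I C d y))\<^sup>2" by simp
    show "(\<Sum>y\<in>bits (nqubits C). (cmod (irun n I C d y))\<^sup>2) \<le> 1" if "I \<in> serial_instances n d" for I
      using irun_S2[OF vc validI_serial[OF that] order_refl] by (simp add: S2_def)
    show "(\<lambda>y. (cmod (irun n (I(d := v)) C d y))\<^sup>2) = (\<lambda>y. (cmod (irun n I C d y))\<^sup>2)" for I v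
    proof -
      have "\<forall>ja<d. \<forall>q\<in>set (olayers C ja). length (qx q) = 2 * n"
      proof (intro allI impI ballI)
        fix ja q assume "ja < d" "q \<in> set (olayers C ja)"
        then show "length (qx q) = 2 * n" using valid_circuit_len[OF vc, of ja q] by simp
      qed
      moreover have "\<forall>c<d. (I(d := v)) c = I c" by simp
      ultimately have "irun n (I(d := v)) C d = irun n I C d"
        using irun_dep[OF n1, of d C "I(d := v)" I] by blast
      then show ?thesis by simp
    qed
  qed
  finally show ?thesis .
qed

lemma term2:
  assumes vc: "valid_circuit n d C" and n1: "n \<ge> 1" and jd: "j < d"
  shows "(\<Sum>I\<in>serial_instances n d. W n I C j)
     \<le> real (nqubits C) * (real (card (serial_instances n d)) / (2 ^ n - 1))"
proof -
  let ?P = "serial_instances n d" and ?Q = "olayers C j" and ?m = "nqubits C"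
  let ?K = "real (card ?P) / (2 ^ n - 1)"
  have K0: "0 \<le> ?K" by (simp add: n1 one_le_power)
  have each: "(\<Sum>I\<in>?P. \<Sum>y\<in>bits ?m. if j < qi q \<and> drop n (get_pos y (qx q)) = snd (I (qi q - 1))
        then (cmod (irun n I C j y))\<^sup>2 else 0) \<le> ?K" if q: "q \<in> set ?Q" for q
  proof (cases "j < qi q")
    case False then show ?thesis using K0 by simp
  next
    case True
    have "valid_query n d ?m q" using valid_circuit_QOK[OF vc jd] q by (simp add: QOK_def)
    then have qd: "qi q \<le> d" by (rule vq_facts(6))
    have "(\<Sum>I\<in>?P. \<Sum>y\<in>bits ?m. if j < qi q \<and> drop n (get_pos y (qx q)) = snd (I (qi q - 1))
        then (cmod (irun n I C j y))\<^sup>2 else 0) = (\<Sum>I\<in>?P. \<Sum>y\<in>bits ?m. if drop n (get_pos y (qx q)) = snd (I (qi q - 1))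
        then (cmod (irun n I C j y))\<^sup>2 else 0)" using True by simp
    also have "\<dots> \<le> ?K"
    proof (rule avg[OF n1 _ finite_bits])
      show "qi q - 1 \<le> d" using qd by simp
      show "\<And>I y. 0 \<le> (cmod (irun n I C j y))\<^sup>2" by simp
      show "(\<Sum>y\<in>bits ?m. (cmod (irun n I C j y))\<^sup>2) \<le> 1" if "I \<in> ?P" for I
        using irun_S2[OF vc validI_serial[OF that]] jd by (simp add: S2_def)
      show "(\<lambda>y. (cmod (irun n (I(qi q - 1 := v)) C j y))\<^sup>2) = (\<lambda>y. (cmod (irun n I C j y))\<^sup>2)" for I v
      proof -
        have "\<forall>ja<j. \<forall>q\<in>set (olayers C ja). length (qx q) = 2 * n"
        proof (intro allI impI ballI)
          fix ja q assume "ja < j" "q \<in> set (olayers C ja)"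
          then show "length (qx q) = 2 * n" using valid_circuit_len[OF vc, of ja q] jd by simp
        qed
        moreover have "\<forall>c<j. (I(qi q - 1 := v)) c = I c" using True by auto
        ultimately have "irun n (I(qi q - 1 := v)) C j = irun n I C j"
          using irun_dep[OF n1, of j C "I(qi q - 1 := v)" I] by blast
        then show ?thesis by simp
      qed
    qed
    finally show ?thesis .
  qed
  have "(\<Sum>I\<in>?P. W n I C j) = (\<Sum>q\<in>set ?Q. \<Sum>I\<in>?P. \<Sum>y\<in>bits ?m. if j < qi q \<and> drop n (get_pos y (qx q)) = snd (I (qi q - 1))
        then (cmod (irun n I C j y))\<^sup>2 else 0)"
    unfolding W_def by (rule sum.swap)
  also have "\<dots> \<le> (\<Sum>q\<in>set ?Q. ?K)" by (rule sum_mono[OF each])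
  also have "\<dots> = real (card (set ?Q)) * ?K" by simp
  also have "\<dots> \<le> real ?m * ?K"
  proof (rule mult_right_mono[OF _ K0])
    have "card (set ?Q) \<le> length ?Q" by (rule card_length)
    also have "\<dots> \<le> ?m" using length_layer_le vc jd by (auto simp: valid_circuit_def)
    finally show "real (card (set ?Q)) \<le> real ?m" by simp
  qed
  finally show ?thesis .
qed

lemma success_bound:
  assumes vc: "valid_circuit n d C" and n1: "n \<ge> 1"
  shows "success_prob n d C \<le> (2 + 8 * real d * real d * real (nqubits C)) / (2 ^ n - 1)"
proof -
  let ?P = "serial_instances n d" and ?m = "nqubits C"
  let ?E = "(2::real) ^ n - 1"
  have E0: "0 < ?E"
  proof -
    have "(2::real) ^ 1 \<le> 2 ^ n" by (rule power_increasing[OF n1]) simp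
    then show ?thesis by simp
  qed
  have finP: "finite ?P" unfolding serial_instances_def by (intro finite_PiE finite_simon_set) simp
  have neP: "?P \<noteq> {}" unfolding serial_instances_def using simon_set_ne[OF n1] by (simp add: PiE_eq_empty_iff)
  have N0: "0 < real (card ?P)" using finP neP by (simp add: card_gt_0_iff)
  have sp: "success_prob n d C = (\<Sum>I\<in>?P. output_prob n d I C (snd (I d))) / real (card ?P)"
    unfolding success_prob_def by (rule integral_pmf_of_set[OF neP finP])
  have "(\<Sum>I\<in>?P. output_prob n d I C (snd (I d))) \<le>
     (\<Sum>I\<in>?P. 2 * S2 {y\<in>bits ?m. get_pos y (outq C) = snd (I d)} (irun n I C d) + 8 * d * (\<Sum>j<d. W n I C j))"
    by (rule sum_mono) (use inst_bound[OF vc validI_serial n1] in simp)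
  also have "\<dots> = 2 * (\<Sum>I\<in>?P. S2 {y\<in>bits ?m. get_pos y (outq C) = snd (I d)} (irun n I C d))
      + 8 * d * (\<Sum>j<d. \<Sum>I\<in>?P. W n I C j)"
    by (simp add: sum.distrib sum_distrib_left sum.swap[of _ ?P])
  also have "\<dots> \<le> 2 * (real (card ?P) / ?E) + 8 * d * (\<Sum>j<d. real ?m * (real (card ?P) / ?E))"
    by (intro add_mono mult_left_mono term1[OF vc n1] sum_mono term2[OF vc n1]) auto
  also have "\<dots> = (2 + 8 * real d * real d * real ?m) * real (card ?P) / ?E"
    by (simp add: add_divide_distrib algebra_simps)
  finally have "(\<Sum>I\<in>?P. output_prob n d I C (snd (I d))) \<le> (2 + 8 * real d * real d * real ?m) * real (card ?P) / ?E" .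
  then show ?thesis unfolding sp using N0 E0 by (simp add: field_simps)
qed

theorem mainTheorem1:
  fixes d a b :: nat
  assumes "d \<ge> 1"
  shows "\<exists>c k::nat. \<forall>n\<ge>1. \<forall>C. valid_circuit n d C \<longrightarrow> nqubits C \<le> a * n ^ b + a \<longrightarrow>
           success_prob n d C \<le> real c * real n ^ k / 2 ^ n"
proof (intro exI allI impI)
  fix n C assume n1: "1 \<le> n" and vc: "valid_circuit n d C" and mb: "nqubits C \<le> a * n ^ b + a"
  let ?m = "real (nqubits C)" and ?N = "real n ^ b" and ?P = "(2::real) ^ n"
  have N1: "1 \<le> ?N" using n1 by (simp add: one_le_power)
  have P2: "2 \<le> ?P"
  proof -
    have "(2::real) ^ 1 \<le> 2 ^ n" by (rule power_increasing[OF n1]) simp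
    then show ?thesis by simp
  qed
  have mN: "?m \<le> 2 * real a * ?N"
  proof -
    have "?m \<le> real a * ?N + real a" using mb by (metis of_nat_add of_nat_le_iff of_nat_mult of_nat_power)
    also have "\<dots> \<le> 2 * real a * ?N" using N1 by (simp add: algebra_simps) (metis mult_left_mono of_nat_0_le_iff mult.right_neutral)
    finally show ?thesis .
  qed
  let ?X = "2 + 8 * real d * real d * ?m"
  have X0: "0 \<le> ?X" by simp
  have "success_prob n d C \<le> ?X / (?P - 1)" by (rule success_bound[OF vc n1])
  also have "\<dots> \<le> 2 * ?X / ?P"
  proof -
    have "?X / (?P - 1) \<le> ?X / (?P / 2)"
      by (rule divide_left_mono) (use P2 X0 in auto)
    also have "?X / (?P / 2) = 2 * ?X / ?P" by simp
    finally show ?thesis .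
  qed
  also have "\<dots> \<le> real (4 + 32 * d * d * a) * ?N / ?P"
  proof (rule divide_right_mono)
    have "2 * ?X = 4 + 16 * (real d * real d) * ?m" by (simp add: algebra_simps)
    also have "\<dots> \<le> 4 * ?N + 16 * (real d * real d) * (2 * real a * ?N)"
      using N1 mN by (intro add_mono mult_left_mono) auto
    also have "\<dots> = real (4 + 32 * d * d * a) * ?N" by (simp add: algebra_simps)
    finally show "2 * ?X \<le> real (4 + 32 * d * d * a) * ?N" .
  qed simp
  finally show "success_prob n d C \<le> real (4 + 32 * d * d * a) * real n ^ b / 2 ^ n" .
qed


end
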